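(* Let $n\ge1$, $D\ge1$, and let $X_n=\{\mathbf{x}^0,\ldots,\mathbf{x}^{n-1}\}\subseteq\{0,1\}^D$ consist of $n$ pairwise distinct vectors, indexed so that $\mathbf{a}\cdot\mathbf{x}^0<\mathbf{a}\cdot\mathbf{x}^1<\cdots<\mathbf{a}\cdot\mathbf{x}^{n-1}$ for some $\mathbf{a}\in\mathbb{Z}^D$. Let $r=\lceil\sqrt n\rceil$. Then there is a three-layer Boolean threshold network with $D$ input nodes, $r+D$ hidden nodes and $2r$ output nodes that maps each $\mathbf{x}^i$ to the concatenation $(\mathbf{h}^k[r],\mathbf{h}^\ell[r])\in\{0,1\}^{2r}$, where $k,\ell$ are the integers with $i=kr+\ell$ and $0\le\ell<r$.
   Context: For integers $0\le i<s$, the step vector $\mathbf{h}^i[s]\in\{0,1\}^s$ has $\mathbf{h}^i[s]_j=1$ for $0\le j\le i$ and $0$ for $i<j<s$. A Boolean threshold function is a map $\{0,1\}^h\to\{0,1\}$, $\mathbf{u}\mapsto[\mathbf{w}\cdot\mathbf{u}\ge\theta]$ (value $1$ iff $\mathbf{w}\cdot\mathbf{u}\ge\theta$) with $\mathbf{w}\in\mathbb{Z}^h,\theta\in\mathbb{Z}$. An $L$-layer Boolean threshold network has layers $1,\ldots,L$; layer $1$ is the input; each node of layer $t+1$ computes a Boolean threshold function of the values of layer $t$; the network computes the map input $\mapsto$ values of layer $L$; layers $2,\ldots,L-1$ are hidden. *)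

theory Defs
  imports Complex_Main
begin

text \<open>Boolean vectors in {0,1}^h are represented as functions nat => bool,
  of which only the entries with index < h are relevant.\<close>

definition dotb :: "nat \<Rightarrow> (nat \<Rightarrow> int) \<Rightarrow> (nat \<Rightarrow> bool) \<Rightarrow> int" where
  "dotb h w u = (\<Sum>j<h. w j * of_bool (u j))"

definition thr :: "nat \<Rightarrow> (nat \<Rightarrow> int) \<Rightarrow> int \<Rightarrow> (nat \<Rightarrow> bool) \<Rightarrow> bool" where
  "thr h w \<theta> u = (dotb h w u \<ge> \<theta>)"

definition layer :: "nat \<Rightarrow> (nat \<Rightarrow> nat \<Rightarrow> int) \<Rightarrow> (nat \<Rightarrow> int) \<Rightarrow> (nat \<Rightarrow> bool) \<Rightarrow> nat \<Rightarrow> bool" where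
  "layer h W t u = (\<lambda>i. thr h (W i) (t i) u)"

text \<open>Three-layer network: din input nodes, m hidden nodes (layer 2), output layer 3
  (outputs read at the indices below the number of output nodes).\<close>
definition net3 :: "nat \<Rightarrow> nat \<Rightarrow> (nat \<Rightarrow> nat \<Rightarrow> int) \<Rightarrow> (nat \<Rightarrow> int)
    \<Rightarrow> (nat \<Rightarrow> nat \<Rightarrow> int) \<Rightarrow> (nat \<Rightarrow> int) \<Rightarrow> (nat \<Rightarrow> bool) \<Rightarrow> nat \<Rightarrow> bool" where
  "net3 din m W1 t1 W2 t2 x = layer m W2 t2 (layer din W1 t1 x)"

text \<open>Step vector h^i[s]: entry j is 1 iff j <= i (for 0 <= j < s).\<close>
definition step_vec :: "nat \<Rightarrow> nat \<Rightarrow> nat \<Rightarrow> bool" where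
  "step_vec s i j = (j \<le> i \<and> j < s)"

definition concat_vec :: "nat \<Rightarrow> (nat \<Rightarrow> bool) \<Rightarrow> (nat \<Rightarrow> bool) \<Rightarrow> nat \<Rightarrow> bool" where
  "concat_vec r u v j = (if j < r then u j else v (j - r))"

end

theory Submission
  imports Defs
begin

lemma tele:
  fixes T :: "nat \<Rightarrow> int"
  shows "(\<Sum>q\<le>k. (if q = 0 then - T 0 else T (q - 1) - T q)) = - T k"
  by (induction k) auto

lemma restr:
  fixes g :: "nat \<Rightarrow> int"
  shows "(\<Sum>q<r. g q * of_bool (q \<le> k)) = (\<Sum>q<min r (Suc k). g q)"
proof (induction r)
  case (Suc r)
  show ?case
  proof (cases "r \<le> k")
    case True
    then have "min (Suc r) (Suc k) = Suc r" "min r (Suc k) = r" by auto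
    then show ?thesis using Suc True by (simp del: of_bool_eq)
  next
    case False
    then have "min (Suc r) (Suc k) = Suc k" "min r (Suc k) = Suc k" by auto
    then show ?thesis using Suc False by (simp del: of_bool_eq)
  qed
qed simp

lemma tele2:
  fixes T :: "nat \<Rightarrow> int"
  assumes "k < r"
  shows "(\<Sum>q<r. (if q = 0 then - T 0 else T (q - 1) - T q) * of_bool (q \<le> k)) = - T k"
proof -
  have "min r (Suc k) = Suc k" using assms by simp
  then show ?thesis unfolding restr by (simp only: lessThan_Suc_atMost tele)
qed

lemma sum_split_add:
  fixes g :: "nat \<Rightarrow> int"
  shows "(\<Sum>q<r + D. g q) = (\<Sum>q<r. g q) + (\<Sum>d<D. g (r + d))"
  by (induction D) auto

lemma main:
  fixes n D r :: nat and x :: "nat \<Rightarrow> nat \<Rightarrow> bool" and a :: "nat \<Rightarrow> int"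
  assumes "n \<ge> 1" and rpos: "r > 0" and rr: "n \<le> r * r"
    and mono: "\<forall>i j. i < j \<and> j < n \<longrightarrow> dotb D a (x i) < dotb D a (x j)"
  shows "\<exists>W1 t1 W2 t2. \<forall>i<n. \<forall>j<2*r.
      net3 D (r + D) W1 t1 W2 t2 (x i) j
        = concat_vec r (step_vec r (i div r)) (step_vec r (i mod r)) j"
proof -
  define v where "v i = dotb D a (x i)" for i
  define M where "M = v (n - 1) + 1"
  define V where "V p = (if p < n then v p else M)" for p
  have vle: "v i \<le> v (n - 1)" if "i < n" for i
  proof (cases "i = n - 1")
    case False
    then have "i < n - 1" using that by simp
    then show ?thesis using mono assms(1) unfolding v_def by fastforce
  qed simp
  have key: "(V p \<le> v i) = (p \<le> i)" if "i < n" for i p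
  proof (cases "p < n")
    case True
    then show ?thesis using mono that unfolding V_def v_def
      by (metis linorder_neqE_nat not_le order.order_iff_strict)
  next
    case False
    then show ?thesis using vle[OF that] that unfolding V_def M_def by auto
  qed
  define W1 :: "nat \<Rightarrow> nat \<Rightarrow> int" where
    "W1 m = (if m < r then a else (\<lambda>d. if d = m - r then 1 else 0))" for m
  define t1 :: "nat \<Rightarrow> int" where "t1 m = (if m < r then V (m * r) else 1)" for m
  define TT where "TT l k = V (k * r + l)" for l k
  define w :: "nat \<Rightarrow> nat \<Rightarrow> int" where
    "w l q = (if q = 0 then - TT l 0 else TT l (q - 1) - TT l q)" for l q
  define W2 :: "nat \<Rightarrow> nat \<Rightarrow> int" where
    "W2 j = (if j < r then (\<lambda>q. if q = j then 1 else 0)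
             else (\<lambda>q. if q < r then w (j - r) q else a (q - r)))" for j
  define t2 :: "nat \<Rightarrow> int" where "t2 j = (if j < r then 1 else 0)" for j
  show ?thesis
  proof (intro exI allI impI)
    fix i j assume i: "i < n" and j: "j < 2 * r"
    define h where "h = layer D W1 t1 (x i)"
    have ir: "i div r < r" using i rr rpos
      by (simp add: less_mult_imp_div_less)
    have hlow: "h m = (m \<le> i div r)" if "m < r" for m
    proof -
      have "h m = (V (m * r) \<le> v i)" using that
        unfolding h_def layer_def thr_def W1_def t1_def v_def by simp
      also have "\<dots> = (m * r \<le> i)" using key[OF i] by simp
      also have "\<dots> = (m \<le> i div r)" using rpos
        by (simp add: less_eq_div_iff_mult_less_eq mult.commute)
      finally show ?thesis .
    qed
    have hhigh: "h (r + d) = x i d" if "d < D" for d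
    proof -
      have e: "(\<lambda>j. W1 (r+d) j * of_bool (x i j)) = (\<lambda>j. if j = d then of_bool (x i d) else 0)"
        by (auto simp: W1_def fun_eq_iff)
      have "dotb D (W1 (r + d)) (x i) = of_bool (x i d)"
        unfolding dotb_def e using that by (simp add: sum.delta)
      then show ?thesis unfolding h_def layer_def thr_def t1_def by simp
    qed
    have net: "net3 D (r + D) W1 t1 W2 t2 (x i) j = thr (r + D) (W2 j) (t2 j) h"
      unfolding net3_def h_def layer_def by simp
    show "net3 D (r + D) W1 t1 W2 t2 (x i) j
        = concat_vec r (step_vec r (i div r)) (step_vec r (i mod r)) j"
    proof (cases "j < r")
      case True
      have e: "(\<lambda>q. W2 j q * of_bool (h q)) = (\<lambda>q. if q = j then of_bool (h j) else 0)"
        using True by (auto simp: W2_def fun_eq_iff)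
      have "dotb (r + D) (W2 j) h = of_bool (h j)"
        unfolding dotb_def e using True by (simp add: sum.delta)
      then show ?thesis using True net hlow[OF True]
        unfolding thr_def t2_def concat_vec_def step_vec_def by simp
    next
      case False
      define l where "l = j - r"
      have l: "l < r" using False j unfolding l_def by simp
      have "dotb (r + D) (W2 j) h
          = (\<Sum>q<r. w l q * of_bool (h q)) + (\<Sum>d<D. a d * of_bool (x i d))"
        unfolding dotb_def W2_def using False
        by (simp add: sum_split_add hhigh l_def)
      also have "(\<Sum>q<r. w l q * of_bool (h q)) = (\<Sum>q<r. w l q * of_bool (q \<le> i div r))"
        by (rule sum.cong) (auto simp: hlow)
      also have "\<dots> = - V ((i div r) * r + l)"
        using tele2[OF ir, of "TT l"] unfolding w_def TT_def by simp
      finally have dt: "dotb (r + D) (W2 j) h = v i - V ((i div r) * r + l)"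
        unfolding v_def dotb_def by simp
      have "thr (r + D) (W2 j) (t2 j) h = ((i div r) * r + l \<le> i)"
        unfolding thr_def t2_def using False dt key[OF i] by simp
      also have "\<dots> = (l \<le> i mod r)"
        by (metis add_le_cancel_left mult.commute div_mult_mod_eq)
      finally show ?thesis using net False l
        unfolding concat_vec_def step_vec_def l_def by simp
    qed
  qed
qed

theorem theorem12:
  fixes n D :: nat and x :: "nat \<Rightarrow> nat \<Rightarrow> bool" and a :: "nat \<Rightarrow> int"
  assumes "n \<ge> 1" and "D \<ge> 1"
    and "\<forall>i<n. \<forall>j<n. i \<noteq> j \<longrightarrow> (\<exists>d<D. x i d \<noteq> x j d)"
    and "\<forall>i j. i < j \<and> j < n \<longrightarrow> dotb D a (x i) < dotb D a (x j)"
  shows "let r = nat \<lceil>sqrt (real n)\<rceil> in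
    \<exists>W1 t1 W2 t2. \<forall>i<n. \<forall>j<2*r.
      net3 D (r + D) W1 t1 W2 t2 (x i) j
        = concat_vec r (step_vec r (i div r)) (step_vec r (i mod r)) j"
proof -
  define r where "r = nat \<lceil>sqrt (real n)\<rceil>"
  have s: "sqrt (real n) \<le> real r" unfolding r_def
    using le_of_int_ceiling[of "sqrt (real n)"] by simp
  have "real n = sqrt (real n) * sqrt (real n)" by simp
  also have "\<dots> \<le> real r * real r" using mult_mono[OF s s] by simp
  finally have rr: "n \<le> r * r" by (metis of_nat_le_iff of_nat_mult)
  have "r > 0" using rr assms(1) by (cases r) auto
  then show ?thesis using main[OF assms(1) _ rr assms(4)] unfolding r_def Let_def by simp
qed

end
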